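(* Let $K \geq 1$ be an integer. Let $X$ be uniformly distributed on $[0,1)$, and let $K-1$ thresholds be drawn independently of each other and of $X$, each uniformly distributed on $[0,1)$; denote them in ascending order by $a_1 \leq a_2 \leq \cdots \leq a_{K-1}$, and set $a_0 = 0$, $a_K = 1$. Define the encoder $\alpha:[0,1) \to \{1,2,\ldots,K\}$ by $\alpha(x) = k$ for $x \in [a_{k-1}, a_k)$. Then the expected conditional entropy of the quantizer index given the thresholds, averaged over the thresholds, is $$R = \mathbb{E}\Big[ H\big(\alpha(X) \,\big|\, \{a_k\}_{k=1}^{K-1}\big)\Big] = \frac{1}{\ln 2}\sum_{k=2}^{K} \frac{1}{k}.$$
   Context: For fixed values of the thresholds, $H(\alpha(X) \mid \{a_k\}_{k=1}^{K-1})$ denotes the Shannon entropy in bits of the discrete random variable $\alpha(X)$ (with $X$ uniform on $[0,1)$ and the thresholds held fixed), i.e. $-\sum_{k} p_k \log_2 p_k$ where $p_k = \Pr[\alpha(X)=k]$, with the convention $0\log_2 0 = 0$; the outer expectation averages this quantity over the random thresholds. *)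

theory Defs
  imports "HOL-Probability.Probability"
begin

definition unif01 :: "real measure" where
  "unif01 = uniform_measure lborel {0..<1}"

definition thresh_space :: "nat \<Rightarrow> (nat \<Rightarrow> real) measure" where
  "thresh_space K = PiM {..<K-1} (\<lambda>_. unif01)"

definition sorted_thr :: "nat \<Rightarrow> (nat \<Rightarrow> real) \<Rightarrow> nat \<Rightarrow> real" where
  "sorted_thr K t k =
     (if k = 0 then 0 else if K \<le> k then 1 else sort (map t [0..<K-1]) ! (k-1))"

definition encoder :: "nat \<Rightarrow> (nat \<Rightarrow> real) \<Rightarrow> real \<Rightarrow> nat" where
  "encoder K t x = (THE k. k \<in> {1..K} \<and> sorted_thr K t (k-1) \<le> x \<and> x < sorted_thr K t k)"

definition cell_prob :: "nat \<Rightarrow> (nat \<Rightarrow> real) \<Rightarrow> nat \<Rightarrow> real" where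
  "cell_prob K t k = measure unif01 {x. encoder K t x = k}"

definition index_entropy :: "nat \<Rightarrow> (nat \<Rightarrow> real) \<Rightarrow> real" where
  "index_entropy K t =
     - (\<Sum>k\<in>{1..K}. (let p = cell_prob K t k in if p = 0 then 0 else p * log 2 p))"

end

theory Submission
  imports Defs
begin


lemma unif01_density: "unif01 = density lborel (\<lambda>x. ennreal (indicator {0..<1::real} x))"
  unfolding unif01_def uniform_measure_def
  by (simp add: ennreal_indicator divide_ennreal_def)

lemma prob_unif01: "prob_space unif01"
  unfolding unif01_def by (rule prob_space_uniform_measure) auto

lemma sets_unif01[simp, measurable_cong]: "sets unif01 = sets borel"
  by (simp add: unif01_def)

lemma space_unif01[simp]: "space unif01 = UNIV"
  by (simp add: unif01_def)

lemma AE_unif01: "AE x in unif01. 0 \<le> x \<and> x < 1"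
  unfolding unif01_def by (rule AE_uniform_measureI) auto

lemma integral_unif01:
  fixes f :: "real \<Rightarrow> real"
  assumes [measurable]: "f \<in> borel_measurable borel"
  shows "integral\<^sup>L unif01 f = (\<integral>x. indicator {0..<1} x * f x \<partial>lborel)"
  unfolding unif01_density
  by (subst integral_density) auto

lemma measure_unif01:
  assumes "B \<in> sets borel"
  shows "measure unif01 B = measure lborel ({0..<1} \<inter> B)"
  unfolding unif01_def using assms by simp


lemma sorted_nth_le_iff:
  fixes ys :: "real list" and c :: real
  assumes s: "sorted ys" and j: "j < length ys"
  shows "ys ! j \<le> c \<longleftrightarrow> j < card {i. i < length ys \<and> ys ! i \<le> c}"
proof
  assume h: "ys ! j \<le> c"
  have "{..j} \<subseteq> {i. i < length ys \<and> ys ! i \<le> c}"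
    using h j s by (auto intro: order_trans[OF sorted_nth_mono[OF s]])
  from card_mono[OF _ this] show "j < card {i. i < length ys \<and> ys ! i \<le> c}" by simp
next
  assume h: "j < card {i. i < length ys \<and> ys ! i \<le> c}"
  show "ys ! j \<le> c"
  proof (rule ccontr)
    assume "\<not> ys ! j \<le> c"
    then have "{i. i < length ys \<and> ys ! i \<le> c} \<subseteq> {..<j}"
    proof (intro subsetI)
      fix i assume "\<not> ys ! j \<le> c" "i \<in> {i. i < length ys \<and> ys ! i \<le> c}"
      then show "i \<in> {..<j}"
        using s sorted_nth_mono[OF s, of j i] by (cases "i < j") auto
    qed
    from card_mono[OF _ this] h show False by simp
  qed
qed

lemma card_filter_sort:
  fixes xs :: "real list"
  shows "card {i. i < length (sort xs) \<and> sort xs ! i \<le> c} = card {i. i < length xs \<and> xs ! i \<le> c}"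
proof -
  have "length (filter (\<lambda>y. y \<le> c) (sort xs)) = length (filter (\<lambda>y. y \<le> c) xs)"
    by (metis mset_filter mset_sort size_mset)
  then show ?thesis by (simp add: length_filter_conv_card)
qed

lemma measurable_sort_nth:
  fixes f :: "'a \<Rightarrow> nat \<Rightarrow> real"
  assumes f: "\<And>i. i < n \<Longrightarrow> (\<lambda>x. f x i) \<in> borel_measurable M" and j: "j < n"
  shows "(\<lambda>x. sort (map (f x) [0..<n]) ! j) \<in> borel_measurable M"
proof (subst borel_measurable_iff_le, intro allI)
  fix c :: real
  have eq: "sort (map (f x) [0..<n]) ! j \<le> c \<longleftrightarrow>
     real j < (\<Sum>i<n. indicator {..c} (f x i))" for x
  proof -
    have "sort (map (f x) [0..<n]) ! j \<le> c \<longleftrightarrow> j < card {i. i < n \<and> f x i \<le> c}"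
    proof -
      have "{i. i < n \<and> map (f x) [0..<n] ! i \<le> c} = {i. i < n \<and> f x i \<le> c}" by auto
      then show ?thesis
      using sorted_nth_le_iff[of "sort (map (f x) [0..<n])" j c] j card_filter_sort[of "map (f x) [0..<n]" c]
      by simp
    qed
    also have "{i. i < n \<and> f x i \<le> c} = {..<n} \<inter> {i. f x i \<le> c}" by auto
    also have "(\<Sum>i<n. indicator {..c} (f x i)) = (\<Sum>i<n. of_bool (f x i \<le> c) :: real)"
      by (simp add: indicator_def)
    ultimately show ?thesis by simp
  qed
  have m: "(\<lambda>x. \<Sum>i<n. indicator {..c} (f x i) :: real) \<in> borel_measurable M"
    using f by (intro borel_measurable_sum) (auto intro!: borel_measurable_indicator' measurable_compose[OF _ borel_measurable_indicator])
  have "{x \<in> space M. real j < (\<Sum>i<n. indicator {..c} (f x i))} \<in> sets M"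
    using m by measurable
  then show "{x \<in> space M. sort (map (f x) [0..<n]) ! j \<le> c} \<in> sets M"
    by (simp add: eq)
qed


definition cellp :: "nat \<Rightarrow> (nat \<Rightarrow> real) \<Rightarrow> nat \<Rightarrow> real" where
  "cellp K t k = max 0 (min 1 (sorted_thr K t k) - max 0 (sorted_thr K t (k-1)))"

definition Sg :: "(real \<Rightarrow> real) \<Rightarrow> nat \<Rightarrow> (nat \<Rightarrow> real) \<Rightarrow> real" where
  "Sg g K t = (\<Sum>k\<in>{1..K}. g (cellp K t k))"

lemma st_mono:
  assumes "1 \<le> i" "i \<le> j" "j < K"
  shows "sorted_thr K t i \<le> sorted_thr K t j"
  using assms unfolding sorted_thr_def
  by (auto intro!: sorted_nth_mono)

lemma st_0[simp]: "sorted_thr K t 0 = 0" by (simp add: sorted_thr_def)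
lemma st_K[simp]: "K \<ge> 1 \<Longrightarrow> sorted_thr K t K = 1" by (simp add: sorted_thr_def)

abbreviation Qenc :: "nat \<Rightarrow> (nat \<Rightarrow> real) \<Rightarrow> real \<Rightarrow> nat \<Rightarrow> bool" where
  "Qenc K t x k \<equiv> k \<in> {1..K} \<and> sorted_thr K t (k-1) \<le> x \<and> x < sorted_thr K t k"

lemma enc_uniq_lt:
  assumes "Qenc K t x j" "Qenc K t x j'" "j < j'"
  shows False
proof -
  have "sorted_thr K t j \<le> sorted_thr K t (j'-1)"
  proof (cases "j = j' - 1")
    case False
    show ?thesis by (rule st_mono) (use assms False in auto)
  qed (use assms in auto)
  then show False using assms by auto
qed

lemma enc_uniq:
  assumes "Qenc K t x j" "Qenc K t x j'"
  shows "j = j'"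
  using enc_uniq_lt[OF assms(1,2)] enc_uniq_lt[OF assms(2,1)] by (metis linorder_neqE_nat)

lemma enc_exists:
  assumes K: "K \<ge> 1" and x: "0 \<le> x" "x < 1"
  shows "\<exists>k. Qenc K t x k"
proof (cases "\<exists>j\<in>{1..K-1}. x < sorted_thr K t j")
  case True
  define j where "j = (LEAST j. j \<in> {1..K-1} \<and> x < sorted_thr K t j)"
  have j: "j \<in> {1..K-1} \<and> x < sorted_thr K t j"
    unfolding j_def using True by (metis (mono_tags, lifting) LeastI)
  have "sorted_thr K t (j-1) \<le> x"
  proof (cases "j = 1")
    case True then show ?thesis using x by simp
  next
    case False
    then have "j - 1 \<in> {1..K-1}" using j by auto
    moreover have "j - 1 < j" using j by auto
    ultimately have "\<not> x < sorted_thr K t (j-1)"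
      using not_less_Least[of "j-1" "\<lambda>j. j \<in> {1..K-1} \<and> x < sorted_thr K t j"] unfolding j_def[symmetric]
      by blast
    then show ?thesis by simp
  qed
  then show ?thesis using j K by (intro exI[of _ j]) auto
next
  case False
  have "sorted_thr K t (K-1) \<le> x"
  proof (cases "K = 1")
    case True then show ?thesis using x by simp
  next
    case False': False
    then have "K - 1 \<in> {1..K-1}" using K by auto
    then show ?thesis using False by (meson not_le)
  qed
  then show ?thesis using K x by (intro exI[of _ K]) auto
qed

lemma encoder_char:
  assumes K: "K \<ge> 1" and x: "0 \<le> x" "x < 1"
  shows "encoder K t x = k \<longleftrightarrow> Qenc K t x k"
proof -
  obtain k0 where k0: "Qenc K t x k0" using enc_exists[OF assms] by blast
  have "encoder K t x = k0"
    unfolding encoder_def by (rule the_equality[where P="\<lambda>k. Qenc K t x k", OF k0], rule sym, erule enc_uniq[OF k0])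
  then show ?thesis using k0 enc_uniq[OF k0, of k] by auto
qed

lemma encoder_set_eq:
  "{x. encoder K t x = k} = {x. Qenc K t x k} \<union>
     {x. (\<forall>j\<in>{1..K}. \<not> (sorted_thr K t (j-1) \<le> x \<and> x < sorted_thr K t j)) \<and> (THE j::nat. False) = k}"
proof (intro set_eqI)
  fix x
  show "x \<in> {x. encoder K t x = k} \<longleftrightarrow> x \<in> {x. Qenc K t x k} \<union>
     {x. (\<forall>j\<in>{1..K}. \<not> (sorted_thr K t (j-1) \<le> x \<and> x < sorted_thr K t j)) \<and> (THE j::nat. False) = k}"
  proof (cases "\<exists>j. Qenc K t x j")
    case True
    then obtain k0 where k0: "Qenc K t x k0" by blast
    have "encoder K t x = k0"
      unfolding encoder_def by (rule the_equality[where P="\<lambda>k. Qenc K t x k", OF k0], rule sym, erule enc_uniq[OF k0])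
    then show ?thesis using k0 enc_uniq[OF k0, of k] by auto
  next
    case False
    then have "(\<lambda>j. Qenc K t x j) = (\<lambda>_. False)" by auto
    then have "encoder K t x = (THE j::nat. False)" unfolding encoder_def by simp
    then show ?thesis using False by auto
  qed
qed

lemma encoder_set_borel: "{x. encoder K t x = k} \<in> sets borel"
  unfolding encoder_set_eq by measurable

lemma cell_prob_eq:
  assumes K: "K \<ge> 1" and k: "k \<in> {1..K}"
  shows "cell_prob K t k = cellp K t k"
proof -
  have "cell_prob K t k = measure lborel ({0..<1} \<inter> {x. encoder K t x = k})"
    unfolding cell_prob_def by (rule measure_unif01[OF encoder_set_borel])
  also have "{0..<1} \<inter> {x. encoder K t x = k} =
      {max 0 (sorted_thr K t (k-1))..<min 1 (sorted_thr K t k)}"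
  proof (intro set_eqI)
    fix x
    show "x \<in> {0..<1} \<inter> {x. encoder K t x = k} \<longleftrightarrow>
      x \<in> {max 0 (sorted_thr K t (k-1))..<min 1 (sorted_thr K t k)}"
    proof (cases "0 \<le> x \<and> x < 1")
      case True
      then show ?thesis using encoder_char[OF K, of x t k] k by auto
    qed auto
  qed
  also have "measure lborel \<dots> = cellp K t k"
    unfolding cellp_def by (cases "max 0 (sorted_thr K t (k-1)) \<le> min 1 (sorted_thr K t k)") auto
  finally show ?thesis .
qed

lemma entropy_eq:
  assumes K: "K \<ge> 1"
  shows "index_entropy K t = (1 / ln 2) * Sg (\<lambda>s. - (s * ln s)) K t"
proof -
  have "index_entropy K t = - (\<Sum>k\<in>{1..K}. cellp K t k * ln (cellp K t k) / ln 2)"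
    unfolding index_entropy_def
    by (intro arg_cong[where f=uminus] sum.cong refl) (auto simp: cell_prob_eq[OF K] Let_def log_def)
  also have "\<dots> = (1 / ln 2) * Sg (\<lambda>s. - (s * ln s)) K t"
    unfolding Sg_def by (simp add: sum_divide_distrib[symmetric] sum_negf)
  finally show ?thesis .
qed

lemma sorted_thr_meas:
  assumes "\<And>i. i < K - 1 \<Longrightarrow> (\<lambda>x. F x i) \<in> borel_measurable M"
  shows "(\<lambda>x. sorted_thr K (F x) k) \<in> borel_measurable M"
proof -
  consider "k = 0" | "K \<le> k" | "k \<noteq> 0" "\<not> K \<le> k" by blast
  then show ?thesis
  proof cases
    case 3
    then have "(\<lambda>x. sort (map (F x) [0..<K-1]) ! (k-1)) \<in> borel_measurable M"
      by (intro measurable_sort_nth assms) auto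
    then show ?thesis using 3 unfolding sorted_thr_def by simp
  next
    case 2
    have "(\<lambda>x. sorted_thr K (F x) k) = (\<lambda>x. if k = 0 then 0 else 1)"
      using 2 by (auto simp: sorted_thr_def)
    then show ?thesis by simp
  qed (auto simp: sorted_thr_def)
qed

lemma Sg_meas:
  assumes g: "g \<in> borel_measurable borel"
    and F: "\<And>i. i < K - 1 \<Longrightarrow> (\<lambda>x. F x i) \<in> borel_measurable M"
  shows "(\<lambda>x. Sg g K (F x)) \<in> borel_measurable M"
  unfolding Sg_def cellp_def
  by (intro borel_measurable_sum measurable_compose[OF _ g] borel_measurable_max borel_measurable_min
      borel_measurable_diff sorted_thr_meas F measurable_const) auto


definition nxt :: "real set \<Rightarrow> real \<Rightarrow> real" where
  "nxt P x = Min (insert 1 {y\<in>P. x < y})"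

definition Phi :: "(real \<Rightarrow> real) \<Rightarrow> real set \<Rightarrow> real" where
  "Phi g P = (\<Sum>x\<in>P. g (nxt P x - x))"

lemma spacing_list:
  fixes ys :: "real list"
  assumes "sorted ys" "ys \<noteq> []" "g 0 = 0"
  shows "(\<Sum>k<length ys - 1. g (ys!(Suc k) - ys!k)) =
         (\<Sum>x\<in>{x\<in>set ys. x < last ys}. g (Min {y\<in>set ys. x < y} - x))"
  using assms(1,2)
proof (induction ys)
  case Nil then show ?case by simp
next
  case (Cons y zs)
  show ?case
  proof (cases zs)
    case Nil
    then show ?thesis using Nil by (auto intro: sum.neutral)
  next
    case (Cons h r)
    have s: "sorted zs" "y \<le> h" "\<forall>z\<in>set zs. h \<le> z" "\<forall>z\<in>set zs. y \<le> z"
      using Cons.prems Cons by auto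
    have last: "last (y # zs) = last zs" using Cons by simp
    have hlast: "h \<le> last zs" using s Cons by simp
    have IH: "(\<Sum>k<length zs - 1. g (zs!(Suc k) - zs!k)) =
         (\<Sum>x\<in>{x\<in>set zs. x < last zs}. g (Min {y\<in>set zs. x < y} - x))"
      using Cons.IH s Cons by simp
    have L: "(\<Sum>k<length (y#zs) - 1. g ((y#zs)!(Suc k) - (y#zs)!k)) =
        g (h - y) + (\<Sum>k<length zs - 1. g (zs!(Suc k) - zs!k))"
    proof -
      have e: "length (y#zs) - 1 = Suc (length zs - 1)" using Cons by simp
      show ?thesis unfolding e sum.lessThan_Suc_shift using Cons by simp
    qed
    show ?thesis
    proof (cases "y = h")
      case True
      have A: "{x\<in>set (y#zs). x < last (y#zs)} = {x\<in>set zs. x < last zs}"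
        using True Cons by auto
      have B: "{z\<in>set (y#zs). x < z} = {z\<in>set zs. x < z}" for x
        using True Cons by auto
      show ?thesis unfolding L IH A B using True \<open>g 0 = 0\<close> by simp
    next
      case False
      then have yh: "y < h" using s by simp
      have ynot: "y \<notin> set zs" using s yh by force
      have ylast: "y < last zs" using yh hlast by simp
      have A: "{x\<in>set (y#zs). x < last (y#zs)} = insert y {x\<in>set zs. x < last zs}"
        using ylast last by auto
      have B: "{z\<in>set (y#zs). x < z} = {z\<in>set zs. x < z}" if "x \<in> set zs" for x
        using that s ynot by force
      have C: "{z\<in>set (y#zs). y < z} = set zs"
        using s yh by force
      have M: "Min (set zs) = h"
        using s Cons by (intro Min_eqI) auto
      have "(\<Sum>x\<in>{x\<in>set (y#zs). x < last (y#zs)}. g (Min {z\<in>set (y#zs). x < z} - x)) =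
          g (h - y) + (\<Sum>x\<in>{x\<in>set zs. x < last zs}. g (Min {z\<in>set (y#zs). x < z} - x))"
      proof -
        have "(\<Sum>x\<in>insert y {x\<in>set zs. x < last zs}. g (Min {z\<in>set (y#zs). x < z} - x)) =
           g (Min {z\<in>set (y#zs). y < z} - y) + (\<Sum>x\<in>{x\<in>set zs. x < last zs}. g (Min {z\<in>set (y#zs). x < z} - x))"
          by (rule sum.insert) (use ynot in auto)
        then show ?thesis unfolding A C M .
      qed
      also have "(\<Sum>x\<in>{x\<in>set zs. x < last zs}. g (Min {z\<in>set (y#zs). x < z} - x)) =
          (\<Sum>x\<in>{x\<in>set zs. x < last zs}. g (Min {z\<in>set zs. x < z} - x))"
        by (intro sum.cong refl) (subst B, auto)
      finally show ?thesis unfolding L IH by simp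
    qed
  qed
qed

lemma Sg_Phi:
  assumes t: "\<And>i. i < n \<Longrightarrow> 0 \<le> t i \<and> t i < 1" and g0: "g 0 = 0"
  shows "Sg g (Suc n) t = Phi g (insert 0 (t ` {..<n}))"
proof -
  define ys where "ys = 0 # sort (map t [0..<n]) @ [1]"
  define P where "P = insert 0 (t ` {..<n})"
  have setys: "set ys = insert 1 P"
    unfolding ys_def P_def by auto
  have sorted: "sorted ys"
    unfolding ys_def using t by (force simp: sorted_append)
  have len: "length ys = n + 2" unfolding ys_def by simp
  have nth: "ys ! k = sorted_thr (Suc n) t k" if kle: "k \<le> Suc n" for k
  proof -
    consider "k = 0" | "k = Suc n" | "0 < k" "k < Suc n" using kle by fastforce
    then show ?thesis
    proof cases
      case 2 then show ?thesis unfolding ys_def sorted_thr_def by (simp add: nth_append)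
    next
      case 3 then show ?thesis unfolding ys_def sorted_thr_def by (auto simp: nth_append)
    qed (simp add: ys_def)
  qed
  have rng: "0 \<le> ys ! k \<and> ys ! k \<le> 1" if "k < length ys" for k
  proof -
    have "ys ! k \<in> set ys" using that by simp
    then show ?thesis unfolding setys P_def using t by force
  qed
  have mono: "ys ! k \<le> ys ! (Suc k)" if "Suc k < length ys" for k
    using sorted_nth_mono[OF sorted, of k "Suc k"] that by simp
  have len1: "length ys - 1 = Suc n" using len by simp
  have "Sg g (Suc n) t = (\<Sum>k<Suc n. g (cellp (Suc n) t (Suc k)))"
    unfolding Sg_def by (simp add: sum.atLeast1_atMost_eq)
  also have "\<dots> = (\<Sum>k<length ys - 1. g (ys!(Suc k) - ys!k))"
    unfolding len1
  proof (intro sum.cong refl)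
    fix k assume k: "k \<in> {..<Suc n}"
    have "cellp (Suc n) t (Suc k) = ys!(Suc k) - ys!k"
      unfolding cellp_def using k nth[of k] nth[of "Suc k"] rng[of k] rng[of "Suc k"] mono[of k] len
      by auto
    then show "g (cellp (Suc n) t (Suc k)) = g (ys!(Suc k) - ys!k)" by simp
  qed
  also have "\<dots> = (\<Sum>x\<in>{x\<in>set ys. x < last ys}. g (Min {y\<in>set ys. x < y} - x))"
    by (rule spacing_list[of ys g, OF sorted _ g0]) (simp add: ys_def)
  also have "{x\<in>set ys. x < last ys} = P"
    unfolding setys using t by (auto simp: ys_def P_def)
  also have "(\<Sum>x\<in>P. g (Min {y\<in>set ys. x < y} - x)) = Phi g P"
    unfolding Phi_def nxt_def setys
    by (intro sum.cong refl arg_cong[where f=g] arg_cong2[where f="(-)"] arg_cong[where f=Min])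
       (auto simp: P_def t)
  finally show ?thesis unfolding P_def .
qed


locale ptset =
  fixes P :: "real set"
  assumes fin: "finite P" and sub: "P \<subseteq> {0..<1}" and zero: "0 \<in> P"
begin

lemma nxt_fin: "finite (insert 1 {y\<in>P. x < y})" using fin by auto

lemma nxt_le1: "nxt P x \<le> 1"
  unfolding nxt_def using nxt_fin by (intro Min_le) auto

lemma nxt_le: "y \<in> P \<Longrightarrow> x < y \<Longrightarrow> nxt P x \<le> y"
  unfolding nxt_def using nxt_fin by (intro Min_le) auto

lemma nxt_gt: "x \<in> P \<Longrightarrow> x < nxt P x"
  unfolding nxt_def using nxt_fin sub by (subst Min_gr_iff) auto

lemma nxt_none: "y \<in> P \<Longrightarrow> x < y \<Longrightarrow> y < nxt P x \<Longrightarrow> False"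
  using nxt_le by fastforce

lemma Phi_insert:
  assumes g0: "g 0 = 0" and u: "0 \<le> u" "u < 1"
  shows "Phi g (insert u P) = Phi g P +
     (\<Sum>x\<in>P. indicator {x<..<nxt P x} u * (g (u - x) + g (nxt P x - u) - g (nxt P x - x)))"
proof (cases "u \<in> P")
  case True
  have "(\<Sum>x\<in>P. indicator {x<..<nxt P x} u * (g (u - x) + g (nxt P x - u) - g (nxt P x - x))) = 0"
    using nxt_none[OF True] by (intro sum.neutral) (auto simp: indicator_def)
  then show ?thesis using True by (simp add: insert_absorb)
next
  case False
  define A where "A = {x\<in>P. x \<le> u}"
  have Afin: "finite A" and Ane: "A \<noteq> {}" using fin zero u unfolding A_def by auto
  define a where "a = Max A"
  have aA: "a \<in> A" unfolding a_def using Afin Ane by simp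
  have aP: "a \<in> P" and au: "a < u" using aA False unfolding A_def by (auto simp: le_less)
  have amax: "x \<in> P \<Longrightarrow> x \<le> u \<Longrightarrow> x \<le> a" for x
    unfolding a_def using Afin by (intro Max_ge) (auto simp: A_def)
  define b where "b = nxt P a"
  have Seq: "{y\<in>P. a < y} = {y\<in>P. u < y}"
    using amax au by force
  have ub: "u < b"
    unfolding b_def nxt_def Seq using nxt_fin u by (subst Min_gr_iff) auto
  have ab: "a < b" using au ub by simp
  have n_u: "nxt (insert u P) u = b"
    unfolding b_def nxt_def Seq by (intro arg_cong[where f=Min]) auto
  have n_a: "nxt (insert u P) a = u"
  proof -
    have "{y\<in>insert u P. a < y} = insert u {y\<in>P. a < y}" using au by auto
    then have "nxt (insert u P) a = Min (insert u (insert 1 {y\<in>P. a < y}))"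
      unfolding nxt_def by (simp add: insert_commute)
    also have "\<dots> = min u b"
      unfolding b_def nxt_def using nxt_fin by (subst Min_insert) auto
    finally show ?thesis using ub by simp
  qed
  have n_x: "nxt (insert u P) x = nxt P x" if x: "x \<in> P" "x \<noteq> a" for x
  proof (cases "x < u")
    case True
    then have xa: "x < a" using amax[OF x(1)] x(2) by simp
    then have "nxt P x \<le> a" using nxt_le[OF aP] by simp
    have "{y\<in>insert u P. x < y} = insert u {y\<in>P. x < y}" using True by auto
    then have "nxt (insert u P) x = Min (insert u (insert 1 {y\<in>P. x < y}))"
      unfolding nxt_def by (simp add: insert_commute)
    also have "\<dots> = min u (nxt P x)"
      unfolding nxt_def using nxt_fin by (subst Min_insert) auto
    finally show ?thesis using \<open>nxt P x \<le> a\<close> au by simp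
  next
    case False
    then have "{y\<in>insert u P. x < y} = {y\<in>P. x < y}" by auto
    then show ?thesis unfolding nxt_def by simp
  qed
  have sum_ind: "(\<Sum>x\<in>P. indicator {x<..<nxt P x} u * (g (u - x) + g (nxt P x - u) - g (nxt P x - x)))
      = g (u - a) + g (b - u) - g (b - a)"
  proof -
    have "(\<Sum>x\<in>P. indicator {x<..<nxt P x} u * (g (u - x) + g (nxt P x - u) - g (nxt P x - x)))
       = indicator {a<..<nxt P a} u * (g (u - a) + g (nxt P a - u) - g (nxt P a - a))"
    proof -
      have "(\<Sum>x\<in>P - {a}. indicator {x<..<nxt P x} u * (g (u - x) + g (nxt P x - u) - g (nxt P x - x))) = 0"
      proof (intro sum.neutral ballI)
        fix x assume x: "x \<in> P - {a}"
        have "u \<notin> {x<..<nxt P x}"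
        proof
          assume ux: "u \<in> {x<..<nxt P x}"
          then have "x < a" using amax[of x] x by force
          then have "nxt P x \<le> a" using nxt_le[OF aP] by simp
          then show False using ux au by simp
        qed
        then show "indicator {x<..<nxt P x} u * (g (u - x) + g (nxt P x - u) - g (nxt P x - x)) = 0"
          by simp
      qed
      then show ?thesis using sum.remove[OF fin aP, of "\<lambda>x. indicator {x<..<nxt P x} u * (g (u - x) + g (nxt P x - u) - g (nxt P x - x))"] by simp
    qed
    also have "\<dots> = g (u - a) + g (b - u) - g (b - a)"
      using au ub unfolding b_def by (simp add: indicator_def)
    finally show ?thesis .
  qed
  have "Phi g (insert u P) = g (b - u) + (\<Sum>x\<in>P. g (nxt (insert u P) x - x))"
    unfolding Phi_def using fin False n_u by simp
  also have "(\<Sum>x\<in>P. g (nxt (insert u P) x - x)) = g (u - a) + (\<Sum>x\<in>P - {a}. g (nxt P x - x))"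
    using sum.remove[OF fin aP, of "\<lambda>x. g (nxt (insert u P) x - x)"] n_a n_x by simp
  also have "(\<Sum>x\<in>P - {a}. g (nxt P x - x)) = Phi g P - g (b - a)"
    unfolding Phi_def b_def using sum.remove[OF fin aP, of "\<lambda>x. g (nxt P x - x)"] by simp
  finally show ?thesis using sum_ind by simp
qed

end


definition Iint :: "(real \<Rightarrow> real) \<Rightarrow> real \<Rightarrow> real" where
  "Iint g L = (\<integral>s. indicator {0<..<L} s * g s \<partial>lborel)"

lemma integrable_ind_bdd:
  fixes h :: "real \<Rightarrow> real"
  assumes S: "S \<in> sets lborel" "emeasure lborel S < \<infinity>"
    and h: "h \<in> borel_measurable borel" and B: "\<And>u. u \<in> S \<Longrightarrow> \<bar>h u\<bar> \<le> B"
  shows "integrable lborel (\<lambda>u. indicator S u * h u)"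
proof (rule Bochner_Integration.integrable_bound[where M=lborel and f="\<lambda>u. indicator S u * B" and g="\<lambda>u. indicator S u * h u"])
  show "integrable lborel (\<lambda>u. indicator S u * B)"
    using S by (intro integrable_mult_left) auto
  show "(\<lambda>u. indicator S u * h u) \<in> borel_measurable lborel"
    using S h by measurable
  show "AE x in lborel. norm (indicator S x * h x) \<le> norm (indicator S x * B)"
    using B by (intro AE_I2) (force simp: indicator_def abs_le_iff)
qed

locale bddg =
  fixes g :: "real \<Rightarrow> real" and B :: real
  assumes meas[measurable]: "g \<in> borel_measurable borel"
    and bdd: "\<And>s. 0 \<le> s \<Longrightarrow> s \<le> 1 \<Longrightarrow> \<bar>g s\<bar> \<le> B"
begin

lemma int_piece:
  assumes x: "0 \<le> x" and L: "0 \<le> L" and xL: "x + L \<le> 1"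
  shows "integrable lborel (\<lambda>u. indicator {x<..<x+L} u * (g (u - x) + g (x + L - u) - g L))"
    and "(\<integral>u. indicator {x<..<x+L} u * (g (u - x) + g (x + L - u) - g L) \<partial>lborel)
       = 2 * Iint g L - L * g L"
proof -
  let ?S = "{x<..<x+L}"
  have fin: "emeasure lborel ?S < \<infinity>" using L by simp
  have i1: "integrable lborel (\<lambda>u. indicator ?S u * g (u - x))"
    by (rule integrable_ind_bdd[where B=B]) (use x L xL fin in \<open>auto intro!: bdd\<close>)
  have i2: "integrable lborel (\<lambda>u. indicator ?S u * g (x + L - u))"
    by (rule integrable_ind_bdd[where B=B]) (use x L xL fin in \<open>auto intro!: bdd\<close>)
  have i3: "integrable lborel (\<lambda>u. indicator ?S u * g L)"
    using fin by (intro integrable_mult_left integrable_real_indicator) auto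
  have eq: "(\<lambda>u. indicator ?S u * (g (u - x) + g (x + L - u) - g L)) =
      (\<lambda>u. indicator ?S u * g (u - x) + indicator ?S u * g (x + L - u) - indicator ?S u * g L)"
    by (auto simp: algebra_simps)
  show "integrable lborel (\<lambda>u. indicator {x<..<x+L} u * (g (u - x) + g (x + L - u) - g L))"
    unfolding eq using i1 i2 i3 by auto
  have e1: "(\<integral>u. indicator ?S u * g (u - x) \<partial>lborel) = Iint g L"
    unfolding Iint_def
    by (subst lborel_integral_real_affine[where c=1 and t=x]) (auto simp: indicator_def intro!: Bochner_Integration.integral_cong)
  have e2: "(\<integral>u. indicator ?S u * g (x + L - u) \<partial>lborel) = Iint g L"
    unfolding Iint_def
    by (subst lborel_integral_real_affine[where c="-1" and t="x+L"]) (auto simp: indicator_def intro!: Bochner_Integration.integral_cong)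
  have e3: "(\<integral>u. indicator ?S u * g L \<partial>lborel) = L * g L"
    using L by simp
  show "(\<integral>u. indicator {x<..<x+L} u * (g (u - x) + g (x + L - u) - g L) \<partial>lborel)
       = 2 * Iint g L - L * g L"
    unfolding eq using i1 i2 i3 e1 e2 e3 by simp
qed

end


locale ptg = ptset P + bddg g B for P g B
begin

definition fx :: "real \<Rightarrow> real \<Rightarrow> real" where
  "fx x u = indicator {x<..<nxt P x} u * (g (u - x) + g (nxt P x - u) - g (nxt P x - x))"

lemma fx_meas[measurable]: "fx x \<in> borel_measurable borel"
  unfolding fx_def by measurable

lemma fx_lborel:
  assumes x: "x \<in> P"
  shows "integrable lborel (fx x)"
    and "(\<integral>u. fx x u \<partial>lborel) = 2 * Iint g (nxt P x - x) - (nxt P x - x) * g (nxt P x - x)"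
proof -
  have x0: "0 \<le> x" using sub x by auto
  have L: "0 \<le> nxt P x - x" using nxt_gt[OF x] by simp
  have xL: "x + (nxt P x - x) \<le> 1" using nxt_le1 by simp
  note ip = int_piece[OF x0 L xL]
  have e: "fx x = (\<lambda>u. indicator {x<..<x + (nxt P x - x)} u *
      (g (u - x) + g (x + (nxt P x - x) - u) - g (nxt P x - x)))"
    unfolding fx_def by (simp add: algebra_simps)
  show "integrable lborel (fx x)" unfolding e by (rule ip(1))
  show "(\<integral>u. fx x u \<partial>lborel) = 2 * Iint g (nxt P x - x) - (nxt P x - x) * g (nxt P x - x)"
    unfolding e by (rule ip(2))
qed

lemma fx_bdd: "x \<in> P \<Longrightarrow> \<bar>fx x u\<bar> \<le> 3 * B"
proof -
  assume x: "x \<in> P"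
  have x0: "0 \<le> x" using sub x by auto
  have xn: "x < nxt P x" "nxt P x \<le> 1" using nxt_gt[OF x] nxt_le1 by auto
  show ?thesis
  proof (cases "u \<in> {x<..<nxt P x}")
    case True
    have "\<bar>g (u - x)\<bar> \<le> B" "\<bar>g (nxt P x - u)\<bar> \<le> B" "\<bar>g (nxt P x - x)\<bar> \<le> B"
      using True x0 xn by (auto intro!: bdd)
    then show ?thesis using True unfolding fx_def by simp
  next
    case False
    have "0 \<le> B" using bdd[of 0] by simp
    then show ?thesis using False unfolding fx_def by simp
  qed
qed

lemma fx_unif:
  assumes x: "x \<in> P"
  shows "integrable unif01 (fx x)"
    and "(\<integral>u. fx x u \<partial>unif01) = 2 * Iint g (nxt P x - x) - (nxt P x - x) * g (nxt P x - x)"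
proof -
  interpret prob_space unif01 by (rule prob_unif01)
  show "integrable unif01 (fx x)"
  proof (rule integrable_const_bound[where B="3*B"])
    show "AE u in unif01. norm (fx x u) \<le> 3*B" using fx_bdd[OF x] by simp
    show "fx x \<in> borel_measurable unif01" by measurable
  qed
  have x0: "0 \<le> x" using sub x by auto
  have xn: "nxt P x \<le> 1" using nxt_le1 by auto
  have "(\<integral>u. fx x u \<partial>unif01) = (\<integral>u. indicator {0..<1} u * fx x u \<partial>lborel)"
    by (rule integral_unif01) simp
  also have "\<dots> = (\<integral>u. fx x u \<partial>lborel)"
    using x0 xn by (intro Bochner_Integration.integral_cong refl) (auto simp: fx_def indicator_def)
  finally show "(\<integral>u. fx x u \<partial>unif01) = 2 * Iint g (nxt P x - x) - (nxt P x - x) * g (nxt P x - x)"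
    using fx_lborel(2)[OF x] by simp
qed

lemma integral_insert:
  "(\<integral>u. Phi g P + (\<Sum>x\<in>P. fx x u) \<partial>unif01) =
     Phi g P + (\<Sum>x\<in>P. 2 * Iint g (nxt P x - x) - (nxt P x - x) * g (nxt P x - x))"
proof -
  interpret prob_space unif01 by (rule prob_unif01)
  have i: "integrable unif01 (\<lambda>u. \<Sum>x\<in>P. fx x u)"
    using fx_unif(1) by auto
  have "(\<integral>u. Phi g P + (\<Sum>x\<in>P. fx x u) \<partial>unif01) = Phi g P + (\<integral>u. (\<Sum>x\<in>P. fx x u) \<partial>unif01)"
    using i prob_space by (subst Bochner_Integration.integral_add) auto
  also have "(\<integral>u. (\<Sum>x\<in>P. fx x u) \<partial>unif01) = (\<Sum>x\<in>P. (\<integral>u. fx x u \<partial>unif01))"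
    using fx_unif(1) by (rule Bochner_Integration.integral_sum)
  also have "\<dots> = (\<Sum>x\<in>P. 2 * Iint g (nxt P x - x) - (nxt P x - x) * g (nxt P x - x))"
    using fx_unif(2) by simp
  finally show ?thesis .
qed

end


definition MM :: "nat \<Rightarrow> (nat \<Rightarrow> real) measure" where
  "MM n = PiM {..<n} (\<lambda>_. unif01)"

lemma prob_MM: "prob_space (MM n)"
  unfolding MM_def using prob_unif01 by (intro prob_space_PiM) auto


interpretation U1: sigma_finite_measure unif01
proof -
  interpret prob_space unif01 by (rule prob_unif01)
  show "sigma_finite_measure unif01" by unfold_locales
qed

interpretation U: product_sigma_finite "\<lambda>_::nat. unif01"
  unfolding product_sigma_finite_def by (simp add: U1.sigma_finite_measure_axioms)

lemma comp_meas: "i < m \<Longrightarrow> (\<lambda>t. t i) \<in> borel_measurable (MM m)"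
  unfolding MM_def by measurable

lemma comp_upd_meas:
  assumes "i < Suc n"
  shows "(\<lambda>p. ((fst p)(n := snd p)) i) \<in> borel_measurable (MM n \<Otimes>\<^sub>M unif01)"
proof (cases "i = n")
  case True
  then show ?thesis by simp
next
  case False
  then have "i < n" using assms by simp
  then show ?thesis using False
    by (simp add: measurable_compose[OF measurable_fst comp_meas])
qed

lemma cellp_rng: "0 \<le> cellp K t k \<and> cellp K t k \<le> 1"
  unfolding cellp_def by auto

context bddg begin

lemma B0: "0 \<le> B" using bdd[of 0] by simp

lemma Sg_bdd: "\<bar>Sg g K t\<bar> \<le> K * B"
proof -
  have "\<bar>Sg g K t\<bar> \<le> (\<Sum>k\<in>{1..K}. \<bar>g (cellp K t k)\<bar>)"
    unfolding Sg_def by (rule sum_abs)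
  also have "\<dots> \<le> (\<Sum>k\<in>{1..K}. B)"
    using cellp_rng by (intro sum_mono bdd) auto
  finally show ?thesis by simp
qed

lemma Sg_int:
  assumes "K - 1 \<le> m"
  shows "integrable (MM m) (Sg g K)"
proof -
  interpret prob_space "MM m" by (rule prob_MM)
  show ?thesis
  proof (rule integrable_const_bound[where B="K*B"])
    show "AE x in MM m. norm (Sg g K x) \<le> K * B" using Sg_bdd by simp
    show "Sg g K \<in> borel_measurable (MM m)"
      using Sg_meas[OF meas, of K "\<lambda>t. t" "MM m"] comp_meas assms by simp
  qed
qed

end

lemma AE_MM: "AE t in MM m. \<forall>i\<in>{..<m}. 0 \<le> t i \<and> t i < 1"
  unfolding MM_def
  by (intro AE_finite_allI finite_lessThan AE_PiM_component[where P="\<lambda>x. 0 \<le> x \<and> x < 1"] prob_unif01 AE_unif01)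


locale recg = G: bddg g B + H: bddg h B' for g B h B' +
  assumes g0: "g 0 = 0" and h0: "h 0 = 0"
    and hI: "\<And>L. 0 \<le> L \<Longrightarrow> L \<le> 1 \<Longrightarrow> h L = 2 * Iint g L - L * g L"
begin

lemma inner:
  assumes t: "\<And>i. i < n \<Longrightarrow> 0 \<le> t i \<and> t i < 1"
  shows "(\<integral>u. Sg g (Suc (Suc n)) (t(n := u)) \<partial>unif01) = Sg g (Suc n) t + Sg h (Suc n) t"
proof -
  define P where "P = insert 0 (t ` {..<n})"
  interpret ptg P g B
    by unfold_locales (use t in \<open>auto simp: P_def\<close>)
  have ae: "AE u in unif01. Sg g (Suc (Suc n)) (t(n := u)) = Phi g P + (\<Sum>x\<in>P. fx x u)"
    using AE_unif01
  proof (rule AE_mp, intro AE_I2 impI)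
    fix u :: real assume u: "0 \<le> u \<and> u < 1"
    have "Sg g (Suc (Suc n)) (t(n := u)) = Phi g (insert 0 ((t(n := u)) ` {..<Suc n}))"
      by (rule Sg_Phi[where g=g, OF _ g0]) (use t u in \<open>auto simp: less_Suc_eq\<close>)
    also have "insert 0 ((t(n := u)) ` {..<Suc n}) = insert u P"
      unfolding P_def lessThan_Suc by auto
    also have "Phi g (insert u P) = Phi g P + (\<Sum>x\<in>P. fx x u)"
      unfolding fx_def using Phi_insert[where g=g, OF g0] u by simp
    finally show "Sg g (Suc (Suc n)) (t(n := u)) = Phi g P + (\<Sum>x\<in>P. fx x u)" .
  qed
  have m1: "(\<lambda>u. Sg g (Suc (Suc n)) (t(n := u))) \<in> borel_measurable unif01"
    by (rule Sg_meas[OF G.meas]) simp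
  have m2: "(\<lambda>u. Phi g P + (\<Sum>x\<in>P. fx x u)) \<in> borel_measurable unif01"
    by measurable
  have "(\<integral>u. Sg g (Suc (Suc n)) (t(n := u)) \<partial>unif01) = (\<integral>u. Phi g P + (\<Sum>x\<in>P. fx x u) \<partial>unif01)"
    by (rule integral_cong_AE[OF m1 m2 ae])
  also have "\<dots> = Phi g P + (\<Sum>x\<in>P. 2 * Iint g (nxt P x - x) - (nxt P x - x) * g (nxt P x - x))"
    by (rule integral_insert)
  also have "(\<Sum>x\<in>P. 2 * Iint g (nxt P x - x) - (nxt P x - x) * g (nxt P x - x)) = Phi h P"
    unfolding Phi_def
  proof (intro sum.cong refl)
    fix x assume x: "x \<in> P"
    show "2 * Iint g (nxt P x - x) - (nxt P x - x) * g (nxt P x - x) = h (nxt P x - x)"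
    proof -
      have "0 \<le> x" using sub x by auto
      then show ?thesis using nxt_gt[OF x] nxt_le1[of x] by (subst hI) auto
    qed
  qed
  also have "Phi g P = Sg g (Suc n) t" unfolding P_def by (rule Sg_Phi[where g=g, OF t g0, symmetric])
  also have "Phi h P = Sg h (Suc n) t" unfolding P_def by (rule Sg_Phi[where g=h, OF t h0, symmetric])
  finally show ?thesis .
qed

lemma recursion:
  "(\<integral>t. Sg g (Suc (Suc n)) t \<partial>MM (Suc n)) = (\<integral>t. Sg g (Suc n) t \<partial>MM n) + (\<integral>t. Sg h (Suc n) t \<partial>MM n)"
proof -
  have "(\<integral>t. Sg g (Suc (Suc n)) t \<partial>MM (Suc n)) =
      (\<integral>t. (\<integral>u. Sg g (Suc (Suc n)) (t(n := u)) \<partial>unif01) \<partial>MM n)"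
    unfolding MM_def lessThan_Suc
    by (rule U.product_integral_insert) (use G.Sg_int[of "Suc (Suc n)" "Suc n"] in \<open>auto simp: MM_def lessThan_Suc\<close>)
  also have "\<dots> = (\<integral>t. Sg g (Suc n) t + Sg h (Suc n) t \<partial>MM n)"
  proof (rule integral_cong_AE)
    have "(\<lambda>p. Sg g (Suc (Suc n)) ((fst p)(n := snd p))) \<in> borel_measurable (MM n \<Otimes>\<^sub>M unif01)"
      by (rule Sg_meas[OF G.meas]) (use comp_upd_meas in auto)
    then show "(\<lambda>t. \<integral>u. Sg g (Suc (Suc n)) (t(n := u)) \<partial>unif01) \<in> borel_measurable (MM n)"
      by (intro U1.borel_measurable_lebesgue_integral) (simp add: split_beta')
    show "(\<lambda>t. Sg g (Suc n) t + Sg h (Suc n) t) \<in> borel_measurable (MM n)"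
      using G.Sg_int[of "Suc n" n] H.Sg_int[of "Suc n" n] by auto
    show "AE t in MM n. (\<integral>u. Sg g (Suc (Suc n)) (t(n := u)) \<partial>unif01) = Sg g (Suc n) t + Sg h (Suc n) t"
      using AE_MM[of n] by eventually_elim (rule inner, auto)
  qed
  also have "\<dots> = (\<integral>t. Sg g (Suc n) t \<partial>MM n) + (\<integral>t. Sg h (Suc n) t \<partial>MM n)"
    using G.Sg_int[of "Suc n" n] H.Sg_int[of "Suc n" n] by (intro Bochner_Integration.integral_add) auto
  finally show ?thesis .
qed

end


lemma Iint_Icc:
  assumes L: "0 \<le> L"
  shows "Iint g L = (LINT s:{0..L}|lborel. g s)"
proof -
  have "Iint g L = interval_lebesgue_integral lborel (ereal 0) (ereal L) g"
  proof -
    have "einterval (ereal 0) (ereal L) = {0<..<L}" by (auto simp: einterval_def)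
    then show ?thesis using L
      unfolding Iint_def interval_lebesgue_integral_def set_lebesgue_integral_def by simp
  qed
  also have "\<dots> = (LINT s:{0..L}|lborel. g s)"
    by (rule interval_integral_Icc) (use L in simp)
  finally show ?thesis .
qed

lemma Iint_FTC:
  fixes g F :: "real \<Rightarrow> real"
  assumes L: "0 \<le> L" and gm: "g \<in> borel_measurable borel"
    and gb: "\<And>s. 0 \<le> s \<Longrightarrow> s \<le> L \<Longrightarrow> \<bar>g s\<bar> \<le> B"
    and Fc: "continuous_on {0..L} F"
    and Fd: "\<And>s. 0 < s \<Longrightarrow> s < L \<Longrightarrow> (F has_real_derivative g s) (at s)"
  shows "Iint g L = F L - F 0"
proof -
  have si: "set_integrable lborel {0..L} g"
    unfolding set_integrable_def using integrable_ind_bdd[of "{0..L}" g B] gm gb L by simp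
  have h1: "(g has_integral (F L - F 0)) {0..L}"
    by (rule fundamental_theorem_of_calculus_interior[OF L Fc])
       (use Fd in \<open>auto simp: has_real_derivative_iff_has_vector_derivative\<close>)
  have "(LINT s:{0..L}|lborel. g s) = integral {0..L} g"
    by (rule set_borel_integral_eq_integral(2)[OF si])
  also have "\<dots> = F L - F 0" using h1 by (rule integral_unique)
  finally show ?thesis using Iint_Icc[OF L] by simp
qed

lemma Iint_pow:
  assumes L: "0 \<le> L" "L \<le> 1"
  shows "Iint (\<lambda>s. s ^ m) L = L ^ Suc m / Suc m"
proof -
  have "Iint (\<lambda>s. s ^ m) L = L ^ Suc m / Suc m - 0 ^ Suc m / Suc m"
  proof (rule Iint_FTC[where B=1])
    show "\<bar>s ^ m\<bar> \<le> 1" if "0 \<le> s" "s \<le> L" for s :: real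
      using that L by (simp add: power_le_one)
    show "continuous_on {0..L} (\<lambda>s::real. s ^ Suc m / Suc m)"
      by (intro continuous_intros) auto
    show "((\<lambda>s::real. s ^ Suc m / Suc m) has_real_derivative s ^ m) (at s)" for s
    proof -
      have "((\<lambda>s::real. s ^ Suc m) has_real_derivative real (Suc m) * s ^ m) (at s)"
        using DERIV_pow[of "Suc m" s] by simp
      then have "((\<lambda>s::real. s ^ Suc m / Suc m) has_real_derivative real (Suc m) * s ^ m / Suc m) (at s)"
        by (rule DERIV_cdivide)
      then show ?thesis by simp
    qed
  qed (use L in auto)
  then show ?thesis by simp
qed


definition ent :: "real \<Rightarrow> real" where "ent s = - (s * ln s)"

lemma ent_meas[measurable]: "ent \<in> borel_measurable borel"
  unfolding ent_def by measurable

lemma ent_bdd: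
  assumes "0 \<le> s" "s \<le> 1" shows "\<bar>ent s\<bar> \<le> 1"
proof (cases "s = 0")
  case False
  then have s: "0 < s" using assms by simp
  have "ln s \<le> 0" using s assms by simp
  moreover have "ln (1/s) \<le> 1/s - 1" using s by (intro ln_le_minus_one) simp
  then have "- ln s \<le> 1/s - 1" using s by (simp add: ln_div)
  then have "s * (- ln s) \<le> s * (1/s - 1)" using s by (intro mult_left_mono) auto
  moreover have "s * (1/s - 1) = 1 - s" using s by (simp add: field_simps)
  ultimately have "s * ln s \<le> 0" "- (s * ln s) \<le> 1"
    using s assms by (auto simp: mult_nonneg_nonpos)
  then show ?thesis unfolding ent_def by simp
qed (simp add: ent_def)


lemma test1: "x > 0 \<Longrightarrow> continuous (at x within {0..L}) (\<lambda>s::real. s^2/4 - s^2 * ln s / 2)"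
proof -
  assume x: "x > 0"
  have "isCont (\<lambda>s::real. s^2/4 - s^2 * ln s / 2) x"
    using x by (intro continuous_intros) auto
  then show ?thesis by (rule continuous_at_imp_continuous_at_within)
qed

lemma Iint_ent:
  assumes L: "0 \<le> L" "L \<le> 1"
  shows "Iint ent L = L^2/4 - L^2 * ln L / 2"
proof (cases "L = 0")
  case True
  then show ?thesis by (simp add: Iint_def)
next
  case False
  then have L0: "0 < L" using L by simp
  define F where "F s = s^2/4 - s^2 * ln s / 2" for s :: real
  have "Iint ent L = F L - F 0"
  proof (rule Iint_FTC[where B=1])
    show "\<bar>ent s\<bar> \<le> 1" if "0 \<le> s" "s \<le> L" for s
      using that L by (intro ent_bdd) auto
    show "continuous_on {0..L} F"
    proof (subst continuous_on_eq_continuous_within, intro ballI)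
      fix x assume x: "x \<in> {0..L}"
      show "continuous (at x within {0..L}) F"
      proof (cases "x = 0")
        case True
        have l1: "((\<lambda>s::real. s^2 * ln s) \<longlongrightarrow> 0) (at_right 0)"
        proof (rule Lim_null_comparison)
          show "eventually (\<lambda>s::real. norm (s^2 * ln s) \<le> s) (at_right 0)"
          proof -
            have "eventually (\<lambda>x. x \<in> {0<..<1::real}) (at_right 0)"
              by (rule eventually_at_right_real) simp
            then show ?thesis
          proof eventually_elim
            case (elim s)
            then have "\<bar>ent s\<bar> \<le> 1" by (intro ent_bdd) auto
            then have "s * \<bar>s * ln s\<bar> \<le> s * 1" using elim by (intro mult_left_mono) (auto simp: ent_def)
            then show ?case using elim by (simp add: power2_eq_square abs_mult mult.assoc)
          qed
          qed
          show "((\<lambda>s::real. s) \<longlongrightarrow> 0) (at_right 0)" by (rule tendsto_ident_at)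
        qed
        have lim: "(F \<longlongrightarrow> 0) (at_right 0)"
        proof -
          have "((\<lambda>s::real. s^2/4 - s^2 * ln s / 2) \<longlongrightarrow> (0^2/4 - 0/2)) (at_right 0)"
            by (intro tendsto_diff tendsto_divide tendsto_power tendsto_ident_at l1 tendsto_const) simp_all
          then show ?thesis unfolding F_def by simp
        qed
        show ?thesis unfolding True continuous_within
          using lim by (simp add: at_within_Icc_at_right[OF L0] F_def)
      next
        case False
        then have "x > 0" using x by simp
        then show ?thesis unfolding F_def by (rule test1)
      qed
    qed
    show "(F has_real_derivative ent s) (at s)" if "0 < s" "s < L" for s
    proof -
      have "((\<lambda>s. s^2/4 - s^2 * ln s / 2) has_real_derivative
          (2 * s / 4 - (2 * s * ln s + s^2 * (1/s)) / 2)) (at s)"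
        using that by (auto intro!: derivative_eq_intros)
      moreover have "2 * s / 4 - (2 * s * ln s + s^2 * (1/s)) / 2 = - (s * ln s)"
        using that by (simp add: power2_eq_square field_simps)
      ultimately show ?thesis unfolding F_def ent_def by simp
    qed
  qed (use L in auto)
  then show ?thesis by (simp add: F_def)
qed



lemma base: "(\<integral>t. Sg g (Suc 0) t \<partial>MM 0) = g 1"
proof -
  interpret prob_space "MM 0" by (rule prob_MM)
  have "Sg g (Suc 0) t = g 1" for t
    unfolding Sg_def cellp_def by simp
  then show ?thesis using prob_space by simp
qed

lemma bddg_pow: "bddg (\<lambda>s. s ^ k) 1"
  by unfold_locales (auto simp: abs_if power_le_one)

lemma Sg_cmult: "Sg (\<lambda>s. c * f s) K t = c * Sg f K t"
  unfolding Sg_def by (simp add: sum_distrib_left)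

lemma mom: "(\<integral>t. Sg (\<lambda>s. s ^ Suc j) (Suc n) t \<partial>MM n) = fact (Suc j) * fact (Suc n) / fact (n + Suc j)"
proof (induction n arbitrary: j)
  case 0
  then show ?case using base[of "\<lambda>s. s ^ Suc j"] by simp
next
  case (Suc n)
  define c :: real where "c = 2 / (j + 2) - 1"
  have c: "\<bar>c\<bar> \<le> 1" unfolding c_def by (auto simp: field_simps abs_if)
  interpret recg "\<lambda>s. s ^ Suc j" 1 "\<lambda>s. c * s ^ Suc (Suc j)" 1
  proof unfold_locales
    show "(\<lambda>s::real. c * s ^ Suc (Suc j)) \<in> borel_measurable borel" by measurable
    show "\<bar>c * s ^ Suc (Suc j)\<bar> \<le> 1" if "0 \<le> s" "s \<le> 1" for s :: real
    proof -
      have p: "\<bar>s ^ Suc (Suc j)\<bar> \<le> 1" using that by (metis abs_of_nonneg power_le_one zero_le_power)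
      have "\<bar>c\<bar> * \<bar>s ^ Suc (Suc j)\<bar> \<le> 1 * 1" by (rule mult_mono[OF c p]) simp_all
      then show ?thesis by (simp add: abs_mult)
    qed
    show "c * L ^ Suc (Suc j) = 2 * Iint (\<lambda>s. s ^ Suc j) L - L * L ^ Suc j" if "0 \<le> L" "L \<le> 1" for L :: real
      using that unfolding Iint_pow[OF that] c_def by (simp add: field_simps)
    show "(\<lambda>s::real. s ^ Suc j) \<in> borel_measurable borel" by measurable
    show "\<bar>s ^ Suc j\<bar> \<le> 1" if "0 \<le> s" "s \<le> 1" for s :: real
      using that by (metis abs_of_nonneg power_le_one zero_le_power)
  qed simp_all
  have "(\<integral>t. Sg (\<lambda>s. s ^ Suc j) (Suc (Suc n)) t \<partial>MM (Suc n)) =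
     (\<integral>t. Sg (\<lambda>s. s ^ Suc j) (Suc n) t \<partial>MM n) + c * (\<integral>t. Sg (\<lambda>s. s ^ Suc (Suc j)) (Suc n) t \<partial>MM n)"
    unfolding recursion Sg_cmult by simp
  also have "\<dots> = fact (Suc j) * fact (Suc n) / fact (n + Suc j) +
      c * (fact (Suc (Suc j)) * fact (Suc n) / fact (n + Suc (Suc j)))"
    using Suc.IH[of j] Suc.IH[of "Suc j"] by simp
  also have "\<dots> = fact (Suc j) * fact (Suc (Suc n)) / fact (Suc n + Suc j)"
  proof -
    define N :: real where "N = real n + j + 2"
    define J :: real where "J = real j + 2"
    define A :: real where "A = fact (Suc j)"
    define Bf :: real where "Bf = fact (Suc n)"
    define D :: real where "D = fact (n + Suc j)"
    have e1: "fact (n + Suc (Suc j)) = N * D"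
      unfolding N_def D_def by (simp add: fact_Suc algebra_simps)
    have e2: "fact (Suc n + Suc j) = N * D"
      unfolding N_def D_def by (simp add: fact_Suc algebra_simps)
    have e3: "fact (Suc (Suc j)) = J * A"
      unfolding J_def A_def by (simp add: fact_Suc algebra_simps)
    have e4: "fact (Suc (Suc n)) = (real n + 2) * Bf"
      unfolding Bf_def by (simp add: fact_Suc algebra_simps)
    have pos: "D > 0" "N > 0" "J > 0" unfolding D_def N_def J_def by auto
    have cJ: "c = 2 / J - 1" unfolding c_def J_def by simp
    have eq: "N + 2 - J = real n + 2" unfolding N_def J_def by simp
    have "A * Bf / D + (2 / J - 1) * (J * A * Bf / (N * D)) = (N + 2 - J) * A * Bf / (N * D)"
      using pos by (simp add: field_simps)
    also have "\<dots> = A * ((real n + 2) * Bf) / (N * D)" unfolding eq by (simp add: ac_simps)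
    finally show ?thesis unfolding e1 e2 e3 e4 cJ A_def[symmetric] Bf_def[symmetric] D_def[symmetric] .
  qed
  finally show ?case .
qed

lemma bddg_ent: "bddg ent 1"
  by unfold_locales (auto intro: ent_bdd)

lemma ent_sum: "(\<integral>t. Sg ent (Suc n) t \<partial>MM n) = (\<Sum>k=2..Suc n. 1 / real k)"
proof (induction n)
  case 0
  then show ?case using base[of ent] by (simp add: ent_def[of 1])
next
  case (Suc n)
  interpret recg ent 1 "\<lambda>s. (1/2) * s ^ 2" 1
  proof unfold_locales
    show "(\<lambda>s::real. (1/2) * s ^ 2) \<in> borel_measurable borel" by measurable
    show "\<bar>(1/2) * s ^ 2\<bar> \<le> 1" if "0 \<le> s" "s \<le> 1" for s :: real
      using that power_le_one[of s 2] by simp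
    show "(1/2) * L ^ 2 = 2 * Iint ent L - L * ent L" if "0 \<le> L" "L \<le> 1" for L :: real
      using that by (simp add: Iint_ent ent_def power2_eq_square field_simps)
    show "\<bar>ent s\<bar> \<le> 1" if "0 \<le> s" "s \<le> 1" for s
      using that by (rule ent_bdd)
  qed (auto simp: ent_def)
  have "(\<integral>t. Sg ent (Suc (Suc n)) t \<partial>MM (Suc n)) =
      (\<integral>t. Sg ent (Suc n) t \<partial>MM n) + (1/2) * (\<integral>t. Sg (\<lambda>s. s ^ Suc 1) (Suc n) t \<partial>MM n)"
    unfolding recursion Sg_cmult by (simp add: numeral_2_eq_2)
  also have "\<dots> = (\<Sum>k=2..Suc n. 1 / real k) + 1 / real (Suc (Suc n))"
  proof -
    define F :: real where "F = fact (Suc n)"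
    have e: "fact (n + Suc 1) = (real n + 2) * F"
      unfolding F_def by (simp add: fact_Suc algebra_simps)
    have e2: "fact (Suc 1) = (2::real)" by (simp add: fact_Suc)
    have F: "F > 0" unfolding F_def by simp
    have "2 * F / ((real n + 2) * F) = 2 / (real n + 2)"
      using F by simp
    then have "1 / 2 * (2 * F / ((real n + 2) * F)) = 1 / real (Suc (Suc n))"
      by (simp add: add.commute)
    then show ?thesis unfolding Suc.IH mom e e2 F_def[symmetric] by simp
  qed
  also have "\<dots> = (\<Sum>k=2..Suc (Suc n). 1 / real k)"
    by simp
  finally show ?case .
qed

theorem theorem2:
  fixes K :: nat
  assumes "K \<ge> 1"
  shows "integrable (thresh_space K) (index_entropy K)
    \<and> (\<integral>t. index_entropy K t \<partial>thresh_space K) = (1 / ln 2) * (\<Sum>k=2..K. 1 / real k)"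
proof -
  obtain n where K: "K = Suc n" using assms by (cases K) auto
  have ts: "thresh_space K = MM n" unfolding thresh_space_def MM_def K by simp
  have ie: "index_entropy K = (\<lambda>t. (1 / ln 2) * Sg ent K t)"
    using entropy_eq[OF assms] unfolding ent_def by (intro ext) simp
  interpret bddg ent 1 by (rule bddg_ent)
  have "integrable (MM n) (Sg ent (Suc n))" by (rule Sg_int) simp
  then have int: "integrable (MM n) (\<lambda>t. (1 / ln 2) * Sg ent (Suc n) t)"
    by (intro integrable_mult_right)
  show ?thesis
  proof
    show "integrable (thresh_space K) (index_entropy K)"
      unfolding ts ie unfolding K by (rule int)
    show "(\<integral>t. index_entropy K t \<partial>thresh_space K) = (1 / ln 2) * (\<Sum>k=2..K. 1 / real k)"
      unfolding ts ie unfolding K by (simp only: Bochner_Integration.integral_mult_right_zero ent_sum)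
  qed
qed


end
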